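(* Let $M$ be a Kripke model with yesterday and $U$ an action model over $L_{\mathsf{DETL}}$, and suppose $M,w^*\models\mathrm{pre}^U(s^* )$ for some $w^*\in W^M$ and $s^*\in W^U$ (so $M[U]$ is a Kripke model). Then: (a) If $M$ satisfies persistence of facts, then so does $M[U]$. (b) If $M$ and $U$ are depth-defined, then so is $M[U]$. (c) If $M$ and $U$ satisfy knowledge of the past and $U$ is history preserving, then $M[U]$ satisfies knowledge of the past. (d) If $M$ satisfies knowledge of the initial time and $U$ is history preserving, then $M[U]$ satisfies knowledge of the initial time. (e) If $M$ and $U$ satisfy uniqueness of the past, then so does $M[U]$. (f) If $M$ and $U$ satisfy perfect recall and $U$ is history preserving, then $M[U]$ satisfies perfect recall. (g) If $M$ and $U$ are synchronous and $U$ is history preserving, then $M[U]$ is synchronous.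
   Context: Fix a nonempty finite set $\mathsf{Agt}$ of agents and a nonempty set $\mathsf{Prop}$ of letters. A Kripke model (with yesterday) is $M=(W^M,(\to^M_a)_{a\in\mathsf{Agt}},\leadsto^M,V^M)$ with $W^M$ a nonempty set, binary relations $\to^M_a,\leadsto^M$ on $W^M$ ($w'\leadsto w$: $w'$ is a yesterday of $w$), $V^M:\mathsf{Prop}\to\mathcal P(W^M)$. An action model over a set $F$ of formulas is $U=(W^U,(\to^U_a)_a,\leadsto^U,\mathrm{pre}^U)$ with $W^U$ nonempty finite, binary relations $\to^U_a,\leadsto^U$, and $\mathrm{pre}^U:W^U\to F$. An event $s$ is a past state if there is no $s'\leadsto^Us$. $L_{\mathsf{DETL}}$ (with action models over it) is given by $\varphi::=p\mid\neg\varphi\mid\varphi\wedge\varphi\mid\Box_a\varphi\mid[Y]\varphi\mid[U,s]\varphi$. Semantics: Boolean standard; $M,w\models\Box_a\varphi$ iff $\varphi$ holds at all $v$ with $w\to^M_av$; $M,w\models[Y]\varphi$ iff $\varphi$ holds at all $v\leadsto^Mw$; $M,w\models[U,s]\varphi$ iff $M,w\models\mathrm{pre}^U(s)$ implies $M[U],(w,s)\models\varphi$. The product $M[U]$ has worlds $\{(v,t)\in W^M\times W^U:M,v\models\mathrm{pre}^U(t)\}$, $(v,t)\to_a(v',t')$ iff $v\to^M_av'$ and $t\to^U_at'$, $(v',t')\leadsto(v,t)$ iff ($v'\leadsto^Mv$, $t'=t$, $t$ a past state) or ($v'=v$, $t'\leadsto^Ut$), and $(v,t)\in V(p)$ iff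 $v\in V^M(p)$. $\models\varphi$ means truth at all pointed Kripke models. A progression is a finite nonempty sequence $x_0,\dots,x_n$ with $x_i\leadsto x_{i+1}$, of length $n$; a history is a progression that cannot be extended by adding elements at the beginning. $\mathrm{depth}(x)$ is the maximum length of a history ending at $x$ if the maximum exists, else $\infty$. The following apply to Kripke models or action models (with worlds/events $w,v,\dots$), except where noted: Persistence of facts (Kripke models only): $w\leadsto w'$ implies ($w\in V(p)\iff w'\in V(p)$) for all $p$. Depth-definedness: $\mathrm{depth}(w)\ne\infty$ for all $w$. Knowledge of the past: $w'\leadsto w\to_a v$ implies there is $v'$ with $v'\leadsto v$. Knowledge of the initial time: if $w\to_av$ and there is no $w'\leadsto w$ then there is no $v'\leadsto v$. Uniqueness of the past: $w'\leadsto w$ and $w''\leadsto w$ imply $w'=w''$. Perfect recall: $w\leadsto v\to_a v'$ implies there is $w'$ with $w\to_aw'\leadsto v'$. Synchronicity: the structure is depth-defined and $w\to_aw'$ implies $\mathrm{depth}(w)=\mathrm{depth}(w')$. An epistemic past state of $U$ is a past state $s$ with $\models\mathrm{pre}^U(s)$ whose only outgoing epistemic arrows are the reflexive arrows $s\to^U_as$ for each $a\in\mathsf{Agt}$. History preservation (action models only): $s'\leadsto^Us$ implies $\models\mathrm{pre}^U(s)\to\mathrm{pre}^U(s')$, and every past state of $U$ is an epistemic past state. *)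

theory Defs
  imports Main "HOL-Library.Extended_Nat"
begin

text \<open>Agents are the elements of a finite (hence nonempty) type 'ag; letters are the
elements of a (nonempty) type 'p.  The events of an action model are natural numbers
(any nonempty finite set of events can be renamed into nat).  An action model embedded in a
formula [U,s]phi is given by its components: event set, epistemic relations, yesterday
relation and precondition map.\<close>

datatype ('p, 'ag) fm =
    Atom 'p
  | Neg "('p, 'ag) fm"
  | Conj "('p, 'ag) fm" "('p, 'ag) fm"
  | Box 'ag "('p, 'ag) fm"
  | Yest "('p, 'ag) fm"
  | Upd "nat set" "'ag \<Rightarrow> nat \<Rightarrow> nat \<Rightarrow> bool" "nat \<Rightarrow> nat \<Rightarrow> bool"
        "nat \<Rightarrow> ('p, 'ag) fm" nat "('p, 'ag) fm"

definition Imp :: "('p, 'ag) fm \<Rightarrow> ('p, 'ag) fm \<Rightarrow> ('p, 'ag) fm" where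
  "Imp \<phi> \<psi> = Neg (Conj \<phi> (Neg \<psi>))"

record ('w, 'ag, 'p) kmodel =
  worlds :: "'w set"
  rel    :: "'ag \<Rightarrow> 'w \<Rightarrow> 'w \<Rightarrow> bool"
  yrel   :: "'w \<Rightarrow> 'w \<Rightarrow> bool"          (* yrel w' w : w' is a yesterday of w *)
  val    :: "'p \<Rightarrow> 'w set"

definition kripke :: "('w, 'ag, 'p) kmodel \<Rightarrow> bool" where
  "kripke M \<longleftrightarrow> worlds M \<noteq> {}
     \<and> (\<forall>a u v. rel M a u v \<longrightarrow> u \<in> worlds M \<and> v \<in> worlds M)
     \<and> (\<forall>u v. yrel M u v \<longrightarrow> u \<in> worlds M \<and> v \<in> worlds M)
     \<and> (\<forall>p. val M p \<subseteq> worlds M)"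

record ('ag, 'p) amodel =
  events :: "nat set"
  arel   :: "'ag \<Rightarrow> nat \<Rightarrow> nat \<Rightarrow> bool"
  ayrel  :: "nat \<Rightarrow> nat \<Rightarrow> bool"
  pre    :: "nat \<Rightarrow> ('p, 'ag) fm"

definition past_state :: "(nat \<Rightarrow> nat \<Rightarrow> bool) \<Rightarrow> nat \<Rightarrow> bool" where
  "past_state Y s \<longleftrightarrow> \<not> (\<exists>s'. Y s' s)"

text \<open>Product update M[U], with worlds the pairs (v,t).  The argument P v t stands for
  "M,v satisfies pre(t)".\<close>

definition prod_gen ::
  "('w, 'ag, 'p) kmodel \<Rightarrow> ('w \<Rightarrow> nat \<Rightarrow> bool) \<Rightarrow> nat set \<Rightarrow> ('ag \<Rightarrow> nat \<Rightarrow> nat \<Rightarrow> bool)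
    \<Rightarrow> (nat \<Rightarrow> nat \<Rightarrow> bool) \<Rightarrow> ('w \<times> nat, 'ag, 'p) kmodel" where
  "prod_gen M P E R Y =
    (let Wp = {(v, t). v \<in> worlds M \<and> t \<in> E \<and> P v t} in
    \<lparr> worlds = Wp,
      rel = (\<lambda>a x y. x \<in> Wp \<and> y \<in> Wp \<and> rel M a (fst x) (fst y) \<and> R a (snd x) (snd y)),
      yrel = (\<lambda>x' x. x' \<in> Wp \<and> x \<in> Wp \<and>
                ((yrel M (fst x') (fst x) \<and> snd x' = snd x \<and> past_state Y (snd x))
                 \<or> (fst x' = fst x \<and> Y (snd x') (snd x)))),
      val = (\<lambda>p. {x \<in> Wp. fst x \<in> val M p}) \<rparr>)"

text \<open>To keep the semantics within one type, nested products are re-encoded injectively: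
  worlds of type 'w \<times> nat list, the product world ((a,l),t) being encoded as (a, l @ [t]).\<close>

definition emb :: "(('w \<times> nat list) \<times> nat, 'ag, 'p) kmodel \<Rightarrow> ('w \<times> nat list, 'ag, 'p) kmodel" where
  "emb N =
    (let f = (\<lambda>((a, l), t). (a, l @ [t])) in
    \<lparr> worlds = f ` worlds N,
      rel = (\<lambda>ag x y. \<exists>u v. x = f u \<and> y = f v \<and> rel N ag u v),
      yrel = (\<lambda>x y. \<exists>u v. x = f u \<and> y = f v \<and> yrel N u v),
      val = (\<lambda>p. f ` val N p) \<rparr>)"

primrec sat :: "('p, 'ag) fm \<Rightarrow> ('w \<times> nat list, 'ag, 'p) kmodel \<Rightarrow> 'w \<times> nat list \<Rightarrow> bool" where
  "sat (Atom p) M w = (w \<in> val M p)"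
| "sat (Neg \<phi>) M w = (\<not> sat \<phi> M w)"
| "sat (Conj \<phi> \<psi>) M w = (sat \<phi> M w \<and> sat \<psi> M w)"
| "sat (Box a \<phi>) M w = (\<forall>v. rel M a w v \<longrightarrow> sat \<phi> M v)"
| "sat (Yest \<phi>) M w = (\<forall>v. yrel M v w \<longrightarrow> sat \<phi> M v)"
| "sat (Upd E R Y pr s \<phi>) M w =
     (sat (pr s) M w \<longrightarrow>
        sat \<phi> (emb (prod_gen M (\<lambda>v t. sat (pr t) M v) E R Y)) (fst w, snd w @ [s]))"

definition valid :: "'w itself \<Rightarrow> ('p, 'ag) fm \<Rightarrow> bool" where
  "valid (_ :: 'w itself) \<phi> \<longleftrightarrow>
     (\<forall>(M :: ('w \<times> nat list, 'ag, 'p) kmodel) w. kripke M \<and> w \<in> worlds M \<longrightarrow> sat \<phi> M w)"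

primrec wf_fm :: "('p, 'ag) fm \<Rightarrow> bool" where
  "wf_fm (Atom p) = True"
| "wf_fm (Neg \<phi>) = wf_fm \<phi>"
| "wf_fm (Conj \<phi> \<psi>) = (wf_fm \<phi> \<and> wf_fm \<psi>)"
| "wf_fm (Box a \<phi>) = wf_fm \<phi>"
| "wf_fm (Yest \<phi>) = wf_fm \<phi>"
| "wf_fm (Upd E R Y pr s \<phi>) =
     (finite E \<and> E \<noteq> {} \<and> s \<in> E
      \<and> (\<forall>a u v. R a u v \<longrightarrow> u \<in> E \<and> v \<in> E)
      \<and> (\<forall>u v. Y u v \<longrightarrow> u \<in> E \<and> v \<in> E)
      \<and> (\<forall>t\<in>E. wf_fm (pr t)) \<and> wf_fm \<phi>)"

definition action_model :: "('ag, 'p) amodel \<Rightarrow> bool" where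
  "action_model U \<longleftrightarrow> finite (events U) \<and> events U \<noteq> {}
     \<and> (\<forall>a u v. arel U a u v \<longrightarrow> u \<in> events U \<and> v \<in> events U)
     \<and> (\<forall>u v. ayrel U u v \<longrightarrow> u \<in> events U \<and> v \<in> events U)
     \<and> (\<forall>t\<in>events U. wf_fm (pre U t))"

definition product :: "('w \<times> nat list, 'ag, 'p) kmodel \<Rightarrow> ('ag, 'p) amodel
     \<Rightarrow> (('w \<times> nat list) \<times> nat, 'ag, 'p) kmodel" where
  "product M U = prod_gen M (\<lambda>v t. sat (pre U t) M v) (events U) (arel U) (ayrel U)"

definition progression :: "('a \<Rightarrow> 'a \<Rightarrow> bool) \<Rightarrow> 'a list \<Rightarrow> bool" where
  "progression Y xs \<longleftrightarrow> xs \<noteq> [] \<and> (\<forall>i. Suc i < length xs \<longrightarrow> Y (xs ! i) (xs ! Suc i))"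

definition history :: "('a \<Rightarrow> 'a \<Rightarrow> bool) \<Rightarrow> 'a list \<Rightarrow> bool" where
  "history Y xs \<longleftrightarrow> progression Y xs \<and> \<not> (\<exists>y. Y y (hd xs))"

definition hist_lengths :: "('a \<Rightarrow> 'a \<Rightarrow> bool) \<Rightarrow> 'a \<Rightarrow> nat set" where
  "hist_lengths Y x = {length xs - 1 | xs. history Y xs \<and> last xs = x}"

definition depth :: "('a \<Rightarrow> 'a \<Rightarrow> bool) \<Rightarrow> 'a \<Rightarrow> enat" where
  "depth Y x = (if hist_lengths Y x \<noteq> {} \<and> finite (hist_lengths Y x)
                then enat (Max (hist_lengths Y x)) else \<infinity>)"

definition persistence :: "('w, 'ag, 'p) kmodel \<Rightarrow> bool" where
  "persistence M \<longleftrightarrow> (\<forall>w w' p. yrel M w w' \<longrightarrow> (w \<in> val M p \<longleftrightarrow> w' \<in> val M p))"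

definition depth_defined :: "'a set \<Rightarrow> ('a \<Rightarrow> 'a \<Rightarrow> bool) \<Rightarrow> bool" where
  "depth_defined S Y \<longleftrightarrow> (\<forall>x\<in>S. depth Y x \<noteq> \<infinity>)"

definition knowledge_past :: "'a set \<Rightarrow> ('ag \<Rightarrow> 'a \<Rightarrow> 'a \<Rightarrow> bool) \<Rightarrow> ('a \<Rightarrow> 'a \<Rightarrow> bool) \<Rightarrow> bool" where
  "knowledge_past S R Y \<longleftrightarrow>
     (\<forall>a w w' v. w \<in> S \<and> w' \<in> S \<and> v \<in> S \<and> Y w' w \<and> R a w v \<longrightarrow> (\<exists>v'\<in>S. Y v' v))"

definition knowledge_initial :: "'a set \<Rightarrow> ('ag \<Rightarrow> 'a \<Rightarrow> 'a \<Rightarrow> bool) \<Rightarrow> ('a \<Rightarrow> 'a \<Rightarrow> bool) \<Rightarrow> bool" where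
  "knowledge_initial S R Y \<longleftrightarrow>
     (\<forall>a w v. w \<in> S \<and> v \<in> S \<and> R a w v \<and> \<not> (\<exists>w'\<in>S. Y w' w) \<longrightarrow> \<not> (\<exists>v'\<in>S. Y v' v))"

definition unique_past :: "'a set \<Rightarrow> ('a \<Rightarrow> 'a \<Rightarrow> bool) \<Rightarrow> bool" where
  "unique_past S Y \<longleftrightarrow>
     (\<forall>w w' w''. w \<in> S \<and> w' \<in> S \<and> w'' \<in> S \<and> Y w' w \<and> Y w'' w \<longrightarrow> w' = w'')"

definition perfect_recall :: "'a set \<Rightarrow> ('ag \<Rightarrow> 'a \<Rightarrow> 'a \<Rightarrow> bool) \<Rightarrow> ('a \<Rightarrow> 'a \<Rightarrow> bool) \<Rightarrow> bool" where
  "perfect_recall S R Y \<longleftrightarrow>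
     (\<forall>a w v v'. w \<in> S \<and> v \<in> S \<and> v' \<in> S \<and> Y w v \<and> R a v v' \<longrightarrow> (\<exists>w'\<in>S. R a w w' \<and> Y w' v'))"

definition synchronous :: "'a set \<Rightarrow> ('ag \<Rightarrow> 'a \<Rightarrow> 'a \<Rightarrow> bool) \<Rightarrow> ('a \<Rightarrow> 'a \<Rightarrow> bool) \<Rightarrow> bool" where
  "synchronous S R Y \<longleftrightarrow> depth_defined S Y \<and>
     (\<forall>a w w'. w \<in> S \<and> w' \<in> S \<and> R a w w' \<longrightarrow> depth Y w = depth Y w')"

text \<open>Epistemic past states and history preservation; validity is taken over models whose
  world type is the one given by the type argument.\<close>

definition epistemic_past_state :: "'w itself \<Rightarrow> ('ag, 'p) amodel \<Rightarrow> nat \<Rightarrow> bool" where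
  "epistemic_past_state T U s \<longleftrightarrow> s \<in> events U \<and> past_state (ayrel U) s \<and> valid T (pre U s)
     \<and> (\<forall>a t. arel U a s t \<longleftrightarrow> t = s)"

definition history_preserving :: "'w itself \<Rightarrow> ('ag, 'p) amodel \<Rightarrow> bool" where
  "history_preserving T U \<longleftrightarrow>
     (\<forall>s s'. ayrel U s' s \<longrightarrow> valid T (Imp (pre U s) (pre U s')))
     \<and> (\<forall>s\<in>events U. past_state (ayrel U) s \<longrightarrow> epistemic_past_state T U s)"

end

theory Submission
  imports Defs
begin

lemma prog_measure:
  fixes Y :: "'a \<Rightarrow> 'a \<Rightarrow> bool" and f :: "'a \<Rightarrow> nat"
  assumes "progression Y xs" "\<And>a b. Y a b \<Longrightarrow> f a < (f b :: nat)"
  shows "\<forall>i<length xs. f (xs!0) + i \<le> f (xs!i)"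
proof (intro allI impI)
  fix i assume "i < length xs" then show "f (xs!0) + i \<le> f (xs!i)"
  proof (induction i)
    case 0 then show ?case by simp
  next
    case (Suc i)
    then have "Y (xs!i) (xs!Suc i)" using assms(1) unfolding progression_def by auto
    then have "f (xs!i) < f (xs!Suc i)" by (rule assms(2))
    with Suc show ?case by simp
  qed
qed

lemma snoc_history:
  assumes "history Y xs" "Y (last xs) x"
  shows "history Y (xs @ [x])"
proof -
  have ne: "xs \<noteq> []" using assms(1) unfolding history_def progression_def by auto
  have "Y ((xs@[x])!i) ((xs@[x])!Suc i)" if "Suc i < length (xs@[x])" for i
  proof (cases "Suc i < length xs")
    case True then show ?thesis using assms(1) unfolding history_def progression_def
      by (auto simp: nth_append)
  next
    case False
    then have "i = length xs - 1" using that by simp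
    then show ?thesis using assms(2) ne by (simp add: nth_append last_conv_nth)
  qed
  then show ?thesis using assms(1) ne unfolding history_def progression_def by auto
qed

lemma butlast_history:
  assumes "history Y xs" "length xs \<ge> 2"
  shows "history Y (butlast xs) \<and> Y (last (butlast xs)) (last xs)"
proof -
  obtain ys z where xs: "xs = ys @ [z]" using assms(2)
    by (metis append_butlast_last_id le_numeral_extra(3) length_0_conv less_2_cases_iff
        less_le_not_le not_le numeral_le_iff semiring_norm(69))
  have ys: "ys \<noteq> []" using assms(2) xs by auto
  have p: "\<forall>i. Suc i < length xs \<longrightarrow> Y (xs ! i) (xs ! Suc i)" and h: "\<not> (\<exists>y. Y y (hd xs))"
    using assms(1) unfolding history_def progression_def by auto
  have "Y (ys!i) (ys!Suc i)" if "Suc i < length ys" for i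
    using p[rule_format, of i] that by (simp add: xs nth_append)
  moreover have "Y (last ys) z"
    using p[rule_format, of "length ys - 1"] ys by (simp add: xs nth_append last_conv_nth)
  ultimately show ?thesis using h ys unfolding history_def progression_def xs by auto
qed

lemma hist_exists:
  assumes "\<And>a b. Y a b \<Longrightarrow> f a < (f b :: nat)"
  shows "\<exists>xs. history Y xs \<and> last xs = x"
proof (induction "f x" arbitrary: x rule: less_induct)
  case less
  show ?case
  proof (cases "\<exists>y. Y y x")
    case True
    then obtain y where y: "Y y x" by blast
    then obtain xs where "history Y xs" "last xs = y" using less assms by blast
    then show ?thesis using snoc_history[where Y=Y and xs=xs and x=x] y by auto
  next
    case False
    then have "history Y [x]" unfolding history_def progression_def by auto
    then show ?thesis by force
  qed
qed

lemma measure_depth: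
  assumes "\<And>a b. Y a b \<Longrightarrow> f a < (f b :: nat)"
  shows "hist_lengths Y x \<noteq> {} \<and> finite (hist_lengths Y x) \<and> Max (hist_lengths Y x) \<le> f x"
proof -
  have sub: "hist_lengths Y x \<subseteq> {..f x}"
  proof
    fix n assume "n \<in> hist_lengths Y x"
    then obtain xs where xs: "n = length xs - 1" "history Y xs" "last xs = x"
      unfolding hist_lengths_def by auto
    then have ne: "xs \<noteq> []" unfolding history_def progression_def by auto
    have "f (xs!0) + (length xs - 1) \<le> f (xs!(length xs - 1))"
      using prog_measure[of Y xs f] assms xs ne unfolding history_def by auto
    then show "n \<in> {..f x}" using xs ne by (simp add: last_conv_nth)
  qed
  have "hist_lengths Y x \<noteq> {}" using hist_exists[where Y=Y and f=f and x=x] assms unfolding hist_lengths_def by auto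
  moreover have "finite (hist_lengths Y x)" using sub finite_subset by blast
  ultimately show ?thesis using sub by auto
qed

definition dep where "dep Y x = Max (hist_lengths Y x)"

lemma measure_depth2:
  assumes "\<And>a b. Y a b \<Longrightarrow> f a < (f b :: nat)"
  shows "depth Y x = enat (dep Y x) \<and> dep Y x \<le> f x"
  using measure_depth[where Y=Y and f=f and x=x] assms unfolding depth_def dep_def by auto

locale dd =
  fixes S and Y :: "'a \<Rightarrow> 'a \<Rightarrow> bool"
  assumes dd: "depth_defined S Y" and restr: "\<And>a b. Y a b \<Longrightarrow> a \<in> S \<and> b \<in> S"
begin

lemma hl: "x \<in> S \<Longrightarrow> hist_lengths Y x \<noteq> {} \<and> finite (hist_lengths Y x)"
  using dd unfolding depth_defined_def depth_def by (auto split: if_splits)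

lemma depth_eq: "x \<in> S \<Longrightarrow> depth Y x = enat (dep Y x)"
  using hl unfolding depth_def dep_def by auto

lemma dep_less: assumes "Y a b" shows "dep Y a < dep Y b"
proof -
  have a: "a \<in> S" and b: "b \<in> S" using restr assms by auto
  have "dep Y a \<in> hist_lengths Y a" using hl[OF a] unfolding dep_def by auto
  then obtain xs where xs: "dep Y a = length xs - 1" "history Y xs" "last xs = a"
    unfolding hist_lengths_def by auto
  then have ne: "xs \<noteq> []" unfolding history_def progression_def by auto
  have "history Y (xs@[b])" using snoc_history[where Y=Y and xs=xs and x=b] xs assms by auto
  then have "length (xs@[b]) - 1 \<in> hist_lengths Y b" unfolding hist_lengths_def by force
  then have "length (xs@[b]) - 1 \<le> dep Y b" using hl[OF b] unfolding dep_def by auto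
  moreover have "length xs > 0" using ne by simp
  ultimately have "length xs \<le> dep Y b" by simp
  then show ?thesis using xs ne by (cases xs) auto
qed

lemma dep_Suc: assumes "b \<in> S" "dep Y b = Suc n" shows "\<exists>a. Y a b \<and> dep Y a = n"
proof -
  have "dep Y b \<in> hist_lengths Y b" using hl[OF assms(1)] unfolding dep_def by auto
  then obtain xs where xs: "Suc n = length xs - 1" "history Y xs" "last xs = b"
    unfolding hist_lengths_def using assms(2) by auto
  then have l: "length xs \<ge> 2" by simp
  from butlast_history[OF xs(2) l] obtain ys where ys: "ys = butlast xs" "history Y ys" 
     "Y (last ys) b" using xs by auto
  have "length ys - 1 \<in> hist_lengths Y (last ys)" using ys unfolding hist_lengths_def by blast
  moreover have "last ys \<in> S" using restr ys by auto
  ultimately have "n \<le> dep Y (last ys)" using hl[of "last ys"] unfolding dep_def using xs ys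
    by (metis Max_ge diff_Suc_1 length_butlast)
  moreover have "dep Y (last ys) < dep Y b" using dep_less ys by auto
  ultimately show ?thesis using ys assms by force
qed

end


context
  fixes M :: "('w \<times> nat list, 'ag, 'p) kmodel" and U :: "('ag, 'p) amodel"
  assumes K: "kripke M" and A: "action_model U"
begin

lemma W: "x \<in> worlds (product M U) \<longleftrightarrow> fst x \<in> worlds M \<and> snd x \<in> events U \<and> sat (pre U (snd x)) M (fst x)"
  unfolding product_def prod_gen_def Let_def by (cases x) auto

lemma R: "rel (product M U) a x y \<longleftrightarrow> x \<in> worlds (product M U) \<and> y \<in> worlds (product M U) \<and> rel M a (fst x) (fst y) \<and> arel U a (snd x) (snd y)"
  unfolding product_def prod_gen_def Let_def by simp

lemma Yr: "yrel (product M U) x' x \<longleftrightarrow> x' \<in> worlds (product M U) \<and> x \<in> worlds (product M U) \<and>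
                ((yrel M (fst x') (fst x) \<and> snd x' = snd x \<and> past_state (ayrel U) (snd x))
                 \<or> (fst x' = fst x \<and> ayrel U (snd x') (snd x)))"
  unfolding product_def prod_gen_def Let_def by simp

lemma V: "val (product M U) p = {x \<in> worlds (product M U). fst x \<in> val M p}"
  unfolding product_def prod_gen_def Let_def by simp

lemma Kr: "rel M a u v \<Longrightarrow> u \<in> worlds M \<and> v \<in> worlds M"
  "yrel M u v \<Longrightarrow> u \<in> worlds M \<and> v \<in> worlds M"
  using K unfolding kripke_def by blast+

lemma Ar: "arel U a u v \<Longrightarrow> u \<in> events U \<and> v \<in> events U"
  "ayrel U u v \<Longrightarrow> u \<in> events U \<and> v \<in> events U"
  using A unfolding action_model_def by auto

lemma valid_M: "valid TYPE('w) \<phi> \<Longrightarrow> w \<in> worlds M \<Longrightarrow> sat \<phi> M w"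
  using K unfolding valid_def by blast

lemma hp_pre: "history_preserving TYPE('w) U \<Longrightarrow> ayrel U s' s \<Longrightarrow> v \<in> worlds M \<Longrightarrow>
   sat (pre U s) M v \<Longrightarrow> sat (pre U s') M v"
  unfolding history_preserving_def using valid_M[of "Imp (pre U s) (pre U s')"]
  by (auto simp: Imp_def)

lemma hp_past: "history_preserving TYPE('w) U \<Longrightarrow> s \<in> events U \<Longrightarrow> past_state (ayrel U) s \<Longrightarrow>
   v \<in> worlds M \<Longrightarrow> sat (pre U s) M v"
  unfolding history_preserving_def epistemic_past_state_def using valid_M by blast

lemma hp_arel: "history_preserving TYPE('w) U \<Longrightarrow> s \<in> events U \<Longrightarrow> past_state (ayrel U) s \<Longrightarrow>
   arel U a s t \<longleftrightarrow> t = s"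
  unfolding history_preserving_def epistemic_past_state_def by blast

lemma part_a: "persistence M \<Longrightarrow> persistence (product M U)"
  unfolding persistence_def V Yr by auto

lemma part_e: "unique_past (worlds M) (yrel M) \<Longrightarrow> unique_past (events U) (ayrel U)
       \<Longrightarrow> unique_past (worlds (product M U)) (yrel (product M U))"
  unfolding unique_past_def Yr W past_state_def
  by (smt (verit) prod.expand)

lemma part_d: assumes "knowledge_initial (worlds M) (rel M) (yrel M)" "history_preserving TYPE('w) U"
  shows "knowledge_initial (worlds (product M U)) (rel (product M U)) (yrel (product M U))"
  unfolding knowledge_initial_def
proof (intro allI impI, elim conjE)
  fix a x y assume x: "x \<in> worlds (product M U)" and y: "y \<in> worlds (product M U)"
    and r: "rel (product M U) a x y" and n: "\<not> (\<exists>w'\<in>worlds (product M U). yrel (product M U) w' x)"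
  obtain w s where xe: "x = (w,s)" by (cases x)
  obtain v t where ye: "y = (v,t)" by (cases y)
  have ps: "past_state (ayrel U) s"
  proof (rule ccontr)
    assume "\<not> past_state (ayrel U) s"
    then obtain s' where s': "ayrel U s' s" unfolding past_state_def by auto
    have "(w,s') \<in> worlds (product M U)" using x s' hp_pre[OF assms(2) s'] Ar(2)[OF s'] by (auto simp: W xe)
    then have "yrel (product M U) (w,s') x" using x s' by (simp add: Yr xe)
    then show False using n \<open>(w,s') \<in> _\<close> by blast
  qed
  have ts: "t = s" using hp_arel[OF assms(2) _ ps] r x by (auto simp: R W xe ye)
  have nw: "\<not> (\<exists>w'\<in>worlds M. yrel M w' w)"
  proof
    assume "\<exists>w'\<in>worlds M. yrel M w' w"
    then obtain w' where w': "w' \<in> worlds M" "yrel M w' w" by auto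
    have "(w',s) \<in> worlds (product M U)" using hp_past[OF assms(2) _ ps w'(1)] x w' by (auto simp: W xe)
    then have "yrel (product M U) (w',s) x" using x w' ps by (simp add: Yr xe)
    then show False using n \<open>(w',s) \<in> _\<close> by blast
  qed
  have f: "w \<in> worlds M" "v \<in> worlds M" "rel M a w v" using r x y by (auto simp: R W xe ye)
  have nv: "\<not> (\<exists>v'\<in>worlds M. yrel M v' v)"
    using assms(1) nw f unfolding knowledge_initial_def by blast
  show "\<not> (\<exists>v'\<in>worlds (product M U). yrel (product M U) v' y)"
  proof
    assume "\<exists>v'\<in>worlds (product M U). yrel (product M U) v' y"
    then obtain v' where "yrel (product M U) v' y" by auto
    then show False using nv ps ts Kr(2) by (auto simp: Yr ye W past_state_def)
  qed
qed

lemma part_c: assumes "knowledge_past (worlds M) (rel M) (yrel M)" "knowledge_past (events U) (arel U) (ayrel U)"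
   "history_preserving TYPE('w) U"
  shows "knowledge_past (worlds (product M U)) (rel (product M U)) (yrel (product M U))"
  unfolding knowledge_past_def
proof (intro allI impI, elim conjE)
  fix a x x' y assume x: "x \<in> worlds (product M U)" and y: "y \<in> worlds (product M U)"
    and x': "x' \<in> worlds (product M U)"
    and r: "rel (product M U) a x y" and yx: "yrel (product M U) x' x"
  obtain w s where xe: "x = (w,s)" by (cases x)
  obtain v t where ye: "y = (v,t)" by (cases y)
  obtain w' s' where x'e: "x' = (w',s')" by (cases x')
  show "\<exists>v'\<in>worlds (product M U). yrel (product M U) v' y"
  proof (cases "yrel M w' w \<and> s' = s \<and> past_state (ayrel U) s")
    case True
    then have ts: "t = s" using hp_arel[OF assms(3) _ ] r x by (auto simp: R W xe ye)
    have f: "w \<in> worlds M" "w' \<in> worlds M" "v \<in> worlds M" "yrel M w' w" "rel M a w v"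
      using True r x y x' by (auto simp: R W xe ye x'e)
    obtain v' where v': "v' \<in> worlds M" "yrel M v' v"
      using assms(1) f unfolding knowledge_past_def by blast
    have "(v',t) \<in> worlds (product M U)" using hp_past[OF assms(3) _ _ v'(1)] True ts y v' by (auto simp: W ye)
    moreover have "yrel (product M U) (v',t) y" using calculation y v' True ts by (simp add: Yr ye)
    ultimately show ?thesis by blast
  next
    case False
    then have "w' = w" "ayrel U s' s" using yx by (auto simp: Yr xe x'e)
    then obtain t' where t': "t' \<in> events U" "ayrel U t' t"
      using assms(2) r x y Ar unfolding knowledge_past_def by (simp add: R W xe ye) blast
    have "(v,t') \<in> worlds (product M U)" using hp_pre[OF assms(3) t'(2)] t' y by (auto simp: W ye)
    moreover have "yrel (product M U) (v,t') y" using calculation y t' by (simp add: Yr ye)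
    ultimately show ?thesis by blast
  qed
qed

lemma part_f: assumes "perfect_recall (worlds M) (rel M) (yrel M)" "perfect_recall (events U) (arel U) (ayrel U)"
   "history_preserving TYPE('w) U"
  shows "perfect_recall (worlds (product M U)) (rel (product M U)) (yrel (product M U))"
  unfolding perfect_recall_def
proof (intro allI impI, elim conjE)
  fix a x y y' assume x: "x \<in> worlds (product M U)" and y: "y \<in> worlds (product M U)"
    and y': "y' \<in> worlds (product M U)"
    and yx: "yrel (product M U) x y" and r: "rel (product M U) a y y'"
  obtain w s where xe: "x = (w,s)" by (cases x)
  obtain v t where ye: "y = (v,t)" by (cases y)
  obtain v' t' where y'e: "y' = (v',t')" by (cases y')
  show "\<exists>w'\<in>worlds (product M U). rel (product M U) a x w' \<and> yrel (product M U) w' y'"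
  proof (cases "yrel M w v \<and> s = t \<and> past_state (ayrel U) t")
    case True
    then have ts: "t' = t" using hp_arel[OF assms(3) _ ] r y by (auto simp: R W y'e ye)
    have f: "w \<in> worlds M" "v' \<in> worlds M" "v \<in> worlds M" "yrel M w v" "rel M a v v'"
      using True r x y y' by (auto simp: R W xe ye y'e)
    obtain w' where w': "w' \<in> worlds M" "rel M a w w'" "yrel M w' v'"
      using assms(1) f unfolding perfect_recall_def by blast
    have "(w',t) \<in> worlds (product M U)" using hp_past[OF assms(3) _ _ w'(1)] True y w' by (auto simp: W ye)
    moreover have "yrel (product M U) (w',t) y'" using calculation y' w' True ts by (simp add: Yr y'e)
    moreover have "rel (product M U) a x (w',t)" using calculation x w' True
      hp_arel[OF assms(3), of t a t] y by (simp add: R xe W ye)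
    ultimately show ?thesis by blast
  next
    case False
    then have wv: "w = v" "ayrel U s t" using yx by (auto simp: Yr xe ye)
    then obtain s'' where s'': "s'' \<in> events U" "arel U a s s''" "ayrel U s'' t'"
      using assms(2) r x y Ar unfolding perfect_recall_def by (simp add: R W xe ye y'e) blast
    have "(v',s'') \<in> worlds (product M U)" using hp_pre[OF assms(3) s''(3)] s'' y' by (auto simp: W y'e)
    moreover have "yrel (product M U) (v',s'') y'" using calculation y' s'' by (simp add: Yr y'e)
    moreover have "rel (product M U) a x (v',s'')" using calculation x s'' wv r by (auto simp: R xe ye y'e)
    ultimately show ?thesis by blast
  qed
qed

lemma ddM: "depth_defined (worlds M) (yrel M) \<Longrightarrow> dd (worlds M) (yrel M)"
  using Kr(2) by (unfold_locales) auto

lemma ddU: "depth_defined (events U) (ayrel U) \<Longrightarrow> dd (events U) (ayrel U)"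
  using Ar(2) by (unfold_locales) auto

definition g where "g x = dep (yrel M) (fst x) + dep (ayrel U) (snd x)"

lemma g_dec: assumes "depth_defined (worlds M) (yrel M)" "depth_defined (events U) (ayrel U)"
   "yrel (product M U) a b" shows "g a < g b"
  using assms(3) dd.dep_less[OF ddM[OF assms(1)]] dd.dep_less[OF ddU[OF assms(2)]]
  unfolding Yr g_def by (metis add_less_mono1 add_strict_left_mono)

lemma part_b: assumes "depth_defined (worlds M) (yrel M)" "depth_defined (events U) (ayrel U)"
  shows "depth_defined (worlds (product M U)) (yrel (product M U))"
  unfolding depth_defined_def using measure_depth2[where Y="yrel (product M U)" and f=g] g_dec[OF assms]
  by auto

lemma part_g: assumes "synchronous (worlds M) (rel M) (yrel M)" "synchronous (events U) (arel U) (ayrel U)"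
   "history_preserving TYPE('w) U"
  shows "synchronous (worlds (product M U)) (rel (product M U)) (yrel (product M U))"
proof -
  have d1: "depth_defined (worlds M) (yrel M)" and d2: "depth_defined (events U) (ayrel U)"
    using assms unfolding synchronous_def by auto
  interpret DM: dd "worlds M" "yrel M" by (rule ddM[OF d1])
  interpret DU: dd "events U" "ayrel U" by (rule ddU[OF d2])
  interpret DP: dd "worlds (product M U)" "yrel (product M U)"
    using part_b[OF d1 d2] by unfold_locales (auto simp: Yr)
  have ge: "\<forall>x \<in> worlds (product M U). g x = n \<longrightarrow> n \<le> dep (yrel (product M U)) x" for n
  proof (induction n)
    case 0 then show ?case by simp
  next
    case (Suc n)
    show ?case
    proof (intro ballI impI)
      fix x assume x: "x \<in> worlds (product M U)" and gx: "g x = Suc n"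
      obtain v t where xe: "x = (v,t)" by (cases x)
      have vt: "v \<in> worlds M" "t \<in> events U" "sat (pre U t) M v" using x by (auto simp: W xe)
      show "Suc n \<le> dep (yrel (product M U)) x"
      proof (cases "past_state (ayrel U) t")
        case False
        then obtain t0 where "ayrel U t0 t" unfolding past_state_def by auto
        then have "dep (ayrel U) t \<noteq> 0" using DU.dep_less by fastforce
        then obtain m where "dep (ayrel U) t = Suc m" using not0_implies_Suc by blast
        then obtain t' where t': "ayrel U t' t" "dep (ayrel U) t' = m" using DU.dep_Suc vt by blast
        have w: "(v,t') \<in> worlds (product M U)" using hp_pre[OF assms(3) t'(1)] vt Ar(2)[OF t'(1)] by (simp add: W)
        have yy: "yrel (product M U) (v,t') x" using w x t' by (simp add: Yr xe)
        have "g (v,t') = n" using gx t' \<open>dep (ayrel U) t = Suc m\<close> by (simp add: g_def xe)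
        then have "n \<le> dep (yrel (product M U)) (v,t')" using Suc.IH w by blast
        then show ?thesis using DP.dep_less[OF yy] by simp
      next
        case True
        then have "\<not> ayrel U t0 t" for t0 unfolding past_state_def by auto
        have "dep (ayrel U) t = 0"
        proof (rule ccontr)
          assume "dep (ayrel U) t \<noteq> 0"
          then obtain m where "dep (ayrel U) t = Suc m" using not0_implies_Suc by blast
          then show False using DU.dep_Suc vt \<open>\<And>t0. \<not> ayrel U t0 t\<close> by blast
        qed
        then have "dep (yrel M) v = Suc n" using gx by (simp add: g_def xe)
        then obtain v' where v': "yrel M v' v" "dep (yrel M) v' = n" using DM.dep_Suc vt by blast
        have w: "(v',t) \<in> worlds (product M U)" using hp_past[OF assms(3) vt(2) True] Kr(2)[OF v'(1)] vt by (simp add: W)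
        have yy: "yrel (product M U) (v',t) x" using w x v' True by (simp add: Yr xe)
        have "g (v',t) = n" using v' \<open>dep (ayrel U) t = 0\<close> by (simp add: g_def)
        then have "n \<le> dep (yrel (product M U)) (v',t)" using Suc.IH w by blast
        then show ?thesis using DP.dep_less[OF yy] by simp
      qed
    qed
  qed
  have eq: "depth (yrel (product M U)) x = enat (g x)" if "x \<in> worlds (product M U)" for x
    using measure_depth2[where Y="yrel (product M U)" and f=g and x=x] g_dec[OF d1 d2] ge that
    by (metis le_antisym)
  have "depth (yrel (product M U)) x = depth (yrel (product M U)) y"
    if "x \<in> worlds (product M U)" "y \<in> worlds (product M U)" "rel (product M U) a x y" for a x y
  proof -
    have f: "fst x \<in> worlds M" "fst y \<in> worlds M" "rel M a (fst x) (fst y)"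
      "snd x \<in> events U" "snd y \<in> events U" "arel U a (snd x) (snd y)" using that by (auto simp: R W)
    have "depth (yrel M) (fst x) = depth (yrel M) (fst y)" using assms(1) f unfolding synchronous_def by blast
    moreover have "depth (ayrel U) (snd x) = depth (ayrel U) (snd y)" using assms(2) f unfolding synchronous_def by blast
    ultimately have "g x = g y" using f DM.depth_eq DU.depth_eq by (simp add: g_def)
    then show ?thesis using eq that by simp
  qed
  then show ?thesis unfolding synchronous_def using part_b[OF d1 d2] by blast
qed

end
theorem theorem19:
  fixes M :: "('w \<times> nat list, 'ag :: finite, 'p) kmodel"
    and U :: "('ag, 'p) amodel"
  assumes "kripke M" and "action_model U"
    and "w0 \<in> worlds M" and "s0 \<in> events U" and "sat (pre U s0) M w0"
  defines "MU \<equiv> product M U"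
  shows
   "(persistence M \<longrightarrow> persistence MU)
  \<and> (depth_defined (worlds M) (yrel M) \<and> depth_defined (events U) (ayrel U)
       \<longrightarrow> depth_defined (worlds MU) (yrel MU))
  \<and> (knowledge_past (worlds M) (rel M) (yrel M) \<and> knowledge_past (events U) (arel U) (ayrel U)
       \<and> history_preserving TYPE('w) U
       \<longrightarrow> knowledge_past (worlds MU) (rel MU) (yrel MU))
  \<and> (knowledge_initial (worlds M) (rel M) (yrel M) \<and> history_preserving TYPE('w) U
       \<longrightarrow> knowledge_initial (worlds MU) (rel MU) (yrel MU))
  \<and> (unique_past (worlds M) (yrel M) \<and> unique_past (events U) (ayrel U)
       \<longrightarrow> unique_past (worlds MU) (yrel MU))
  \<and> (perfect_recall (worlds M) (rel M) (yrel M) \<and> perfect_recall (events U) (arel U) (ayrel U)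
       \<and> history_preserving TYPE('w) U
       \<longrightarrow> perfect_recall (worlds MU) (rel MU) (yrel MU))
  \<and> (synchronous (worlds M) (rel M) (yrel M) \<and> synchronous (events U) (arel U) (ayrel U)
       \<and> history_preserving TYPE('w) U
       \<longrightarrow> synchronous (worlds MU) (rel MU) (yrel MU))"
  using part_a[OF assms(1,2)] part_b[OF assms(1,2)] part_c[OF assms(1,2)] part_d[OF assms(1,2)]
    part_e[OF assms(1,2)] part_f[OF assms(1,2)] part_g[OF assms(1,2)]
  unfolding MU_def by blast

end
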